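(* Let $n\ge 2$ and let $(G(k))_{k\in\mathbb{N}}$ be a sequence of digraphs on $\mathcal{V}=\{1,\dots,n\}$ with knowledge sets evolving by the flooding update described in the context. Let $\psi(k)=n$ for $k\le\lceil n/2\rceil-1$ and $\psi(k)=n-k$ for $k\ge\lceil n/2\rceil$. If for every $k\in\{0,1,\dots,n-2\}$ the digraph $G(k)$ contains $\psi(k)(k)$, then for every node $i\in\mathcal{V}$ we have $|\mathcal{K}_i(n)|=n$, and $n$ is the smallest nonnegative integer $k$ with $|\mathcal{K}_i(k)|\le k$; hence every node can determine the network size $n$ from the cardinalities of its own knowledge sets by time $k=n$.
   Context: Network: $\mathcal{V}=\{1,\dots,n\}$; node $i$ holds initial data $d_i\in\mathbb{R}$, pairwise distinct. At discrete times $k\in\mathbb{N}$ communication follows digraph $G(k)=(\mathcal{V},\mathcal{E}(k))$; node $i$ sends to $j$ at time $k$ iff $(i,j)\in\mathcal{E}(k)$. Knowledge sets: $\mathcal{K}_i(0)=\{d_i\}$ and $\mathcal{K}_j(k+1)=\mathcal{K}_j(k)\cup\bigcup_{i:(i,j)\in\mathcal{E}(k)}\mathcal{K}_i(k)$. An input-cord to node $i$ at time $k$ is an ordered list $(\mathcal{I}^i_1,\dots,\mathcal{I}^i_m)$ of pairwise distinct nodes of $\mathcal{V}\setminus\{i\}$ with $(\mathcal{I}^i_j,\mathcal{I}^i_{j+1})\in\mathcal{E}(k)$ for $j=1,\dots,m-1$ and $(\mathcal{I}^i_m,i)\in\mathcal{E}(k)$; its cardinality is $m$. It is closed if moreover $(i,\mathcal{I}^i_1)\in\mathcal{E}(k)$.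 For an integer $\chi$, node $i$ is contained in a $\chi(k)$-cycle if it has at time $k$ a closed input-cord of cardinality greater than $\chi-2$; $G(k)$ contains $\chi(k)$ if every node is contained in a $\chi(k)$-cycle. *)

theory Defs
  imports Complex_Main
begin

text \<open>Nodes are the naturals 1..n; a time-varying digraph is E :: nat => (nat * nat) set,
  where (i,j) in E k means node i sends to node j at time k.\<close>

definition nodes :: "nat \<Rightarrow> nat set" where
  "nodes n = {1..n}"

fun know :: "(nat \<Rightarrow> (nat \<times> nat) set) \<Rightarrow> (nat \<Rightarrow> real) \<Rightarrow> nat \<Rightarrow> nat \<Rightarrow> real set" where
  "know E d 0 j = {d j}"
| "know E d (Suc k) j = know E d k j \<union> (\<Union>i\<in>{i. (i, j) \<in> E k}. know E d k i)"

definition input_cord :: "nat \<Rightarrow> (nat \<Rightarrow> (nat \<times> nat) set) \<Rightarrow> nat \<Rightarrow> nat \<Rightarrow> nat list \<Rightarrow> bool" where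
  "input_cord n E k i cs \<longleftrightarrow>
     cs \<noteq> [] \<and> distinct cs \<and> set cs \<subseteq> nodes n - {i} \<and>
     (\<forall>j. Suc j < length cs \<longrightarrow> (cs ! j, cs ! Suc j) \<in> E k) \<and>
     (last cs, i) \<in> E k"

definition closed_input_cord :: "nat \<Rightarrow> (nat \<Rightarrow> (nat \<times> nat) set) \<Rightarrow> nat \<Rightarrow> nat \<Rightarrow> nat list \<Rightarrow> bool" where
  "closed_input_cord n E k i cs \<longleftrightarrow> input_cord n E k i cs \<and> (i, hd cs) \<in> E k"

definition in_cycle :: "nat \<Rightarrow> (nat \<Rightarrow> (nat \<times> nat) set) \<Rightarrow> int \<Rightarrow> nat \<Rightarrow> nat \<Rightarrow> bool" where
  "in_cycle n E chi k i \<longleftrightarrow> (\<exists>cs. closed_input_cord n E k i cs \<and> int (length cs) > chi - 2)"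

definition contains_cycle :: "nat \<Rightarrow> (nat \<Rightarrow> (nat \<times> nat) set) \<Rightarrow> int \<Rightarrow> nat \<Rightarrow> bool" where
  "contains_cycle n E chi k \<longleftrightarrow> (\<forall>i\<in>nodes n. in_cycle n E chi k i)"

definition psi :: "nat \<Rightarrow> nat \<Rightarrow> int" where
  "psi n k = (if int k \<le> \<lceil>real n / 2\<rceil> - 1 then int n else int n - int k)"

end

theory Submission
  imports Defs
begin

lemma know_sub:
  assumes "\<And>k. E k \<subseteq> nodes n \<times> nodes n" "i \<in> nodes n"
  shows "know E d k i \<subseteq> d ` nodes n"
  using assms(2)
proof (induction k arbitrary: i)
  case 0 then show ?case by simp
next
  case (Suc k)
  have "\<And>p. (p, i) \<in> E k \<Longrightarrow> p \<in> nodes n" using assms(1) by blast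
  then show ?case using Suc by auto
qed

lemma know_mono_le:
  assumes "k \<le> k'" shows "know E d k j \<subseteq> know E d k' j"
  using assms
proof (induction k' rule: dec_induct)
  case base then show ?case by simp
next
  case (step m) then show ?case by auto
qed

lemma edge_in:
  assumes "xs \<noteq> []" "\<forall>j. Suc j < length xs \<longrightarrow> (xs!j, xs!Suc j) \<in> R"
    "(last xs, y) \<in> R" "y \<in> B" "\<exists>x\<in>set xs. x \<notin> B"
  shows "\<exists>u v. (u,v) \<in> R \<and> u \<notin> B \<and> v \<in> B"
  using assms
proof (induction xs)
  case Nil then show ?case by simp
next
  case (Cons x xs)
  show ?case
  proof (cases "xs = []")
    case True then show ?thesis using Cons by auto
  next
    case False
    have e: "\<forall>j. Suc j < length xs \<longrightarrow> (xs!j, xs!Suc j) \<in> R"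
    proof (intro allI impI)
      fix j assume "Suc j < length xs"
      then have "Suc (Suc j) < length (x#xs)" by simp
      then show "(xs!j, xs!Suc j) \<in> R" using Cons.prems(2) by fastforce
    qed
    have l: "(last xs, y) \<in> R" using Cons.prems(3) False by simp
    show ?thesis
    proof (cases "\<exists>x\<in>set xs. x \<notin> B")
      case True then show ?thesis using Cons.IH[OF False e l Cons.prems(4)] by blast
    next
      case nb: False
      then have "x \<notin> B" using Cons.prems(5) by auto
      moreover have "(x, xs!0) \<in> R" using Cons.prems(2) False
        by (metis One_nat_def length_Cons length_greater_0_conv nth_Cons_0 nth_Cons_Suc Suc_less_eq)
      moreover have "xs!0 \<in> B" using nb False by auto
      ultimately show ?thesis by blast
    qed
  qed
qed

lemma grow:
  assumes E: "\<And>k. E k \<subseteq> nodes n \<times> nodes n"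
    and cyc: "contains_cycle n E (psi n t) t"
    and B: "B \<subseteq> nodes n" "B \<noteq> {}" "card B < n - t"
  shows "\<exists>u v. (u,v) \<in> E t \<and> u \<in> nodes n \<and> u \<notin> B \<and> v \<in> B"
proof -
  obtain v0 where v0: "v0 \<in> B" using B by blast
  then have "v0 \<in> nodes n" using B by blast
  then obtain cs where cs: "closed_input_cord n E t v0 cs" "int (length cs) > psi n t - 2"
    using cyc unfolding contains_cycle_def in_cycle_def by blast
  have ps: "psi n t \<ge> int n - int t" unfolding psi_def by simp
  have ic: "cs \<noteq> []" "distinct cs" "set cs \<subseteq> nodes n - {v0}"
    "\<forall>j. Suc j < length cs \<longrightarrow> (cs ! j, cs ! Suc j) \<in> E t" "(last cs, v0) \<in> E t"
    using cs(1) unfolding closed_input_cord_def input_cord_def by auto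
  have "card (set cs) = length cs" using ic(2) by (simp add: distinct_card)
  have lt: "card B < n - t" by fact
  have "\<exists>x\<in>set cs. x \<notin> B"
  proof (rule ccontr)
    assume "\<not> ?thesis"
    then have "insert v0 (set cs) \<subseteq> B" using v0 by auto
    moreover have "finite B" using B(1) unfolding nodes_def using finite_subset by blast
    ultimately have "card (insert v0 (set cs)) \<le> card B" by (simp add: card_mono)
    moreover have "card (insert v0 (set cs)) = length cs + 1"
    proof -
      have "v0 \<notin> set cs" using ic(3) by blast
      then show ?thesis using \<open>card (set cs) = length cs\<close> by (simp add: card_insert_if)
    qed
    ultimately show False using lt cs(2) ps by linarith
  qed
  then obtain u v where "(u,v) \<in> E t" "u \<notin> B" "v \<in> B"
    using edge_in[OF ic(1) ic(4) ic(5) v0] by blast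
  then show ?thesis using E by blast
qed

lemma backw:
  assumes E: "\<And>k. E k \<subseteq> nodes n \<times> nodes n"
    and cyc: "\<And>k. k \<le> n - 2 \<Longrightarrow> contains_cycle n E (psi n k) k"
    and i: "i \<in> nodes n" and k: "k \<le> n - 1" 
  shows "s \<le> k \<Longrightarrow> \<exists>B. B \<subseteq> nodes n \<and> card B \<ge> s + 1 \<and> (\<forall>j\<in>B. know E d (k-s) j \<subseteq> know E d k i)"
proof (induction s)
  case 0 then show ?case using i by (intro exI[of _ "{i}"]) auto
next
  case (Suc s)
  then obtain B where B: "B \<subseteq> nodes n" "card B \<ge> s + 1" "\<forall>j\<in>B. know E d (k-s) j \<subseteq> know E d k i"
    by auto
  have sub: "\<forall>j\<in>B. know E d (k - Suc s) j \<subseteq> know E d k i"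
    using B(3) know_mono_le[of "k - Suc s" "k - s" E d] by (meson diff_le_mono2 le_SucI order.refl subset_trans)
  show ?case
  proof (cases "card B \<ge> Suc s + 1")
    case True then show ?thesis using B sub by blast
  next
    case False
    define t where "t = k - Suc s"
    have cB: "card B = s + 1" using False B(2) by simp
    have tt: "Suc t = k - s" using Suc.prems t_def by simp
    have "t \<le> n - 2" using Suc.prems k t_def by simp
    then have cy: "contains_cycle n E (psi n t) t" by (rule cyc)
    have ne: "B \<noteq> {}" using cB by auto
    have "card B < n - t" using cB Suc.prems k t_def by simp
    then obtain u v where uv: "(u,v) \<in> E t" "u \<in> nodes n" "u \<notin> B" "v \<in> B"
      using grow[OF E cy B(1) ne] by blast
    have "know E d t u \<subseteq> know E d (Suc t) v" using uv(1) by auto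
    then have "know E d t u \<subseteq> know E d k i" using B(3) uv(4) tt by (metis subset_trans)
    moreover have "finite B" using B(1) unfolding nodes_def using finite_subset by blast
    ultimately show ?thesis using B(1) sub uv cB t_def
      by (intro exI[of _ "insert u B"]) auto
  qed
qed

lemma card_lb:
  assumes E: "\<And>k. E k \<subseteq> nodes n \<times> nodes n"
    and inj: "inj_on d (nodes n)"
    and cyc: "\<And>k. k \<le> n - 2 \<Longrightarrow> contains_cycle n E (psi n k) k"
    and i: "i \<in> nodes n" and k: "k \<le> n - 1"
  shows "card (know E d k i) \<ge> k + 1"
proof -
  obtain B where B: "B \<subseteq> nodes n" "card B \<ge> k + 1" "\<forall>j\<in>B. know E d (k-k) j \<subseteq> know E d k i"
    using backw[OF E cyc i k, of k d] by auto
  have "d ` B \<subseteq> know E d k i" using B(3) by auto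
  moreover have "finite (know E d k i)"
    using know_sub[OF E i] unfolding nodes_def by (meson finite_atLeastAtMost finite_imageI finite_subset)
  ultimately have "card (d ` B) \<le> card (know E d k i)" by (simp add: card_mono)
  moreover have "card (d ` B) = card B" using inj B(1) by (simp add: card_image inj_on_subset)
  ultimately show ?thesis using B(2) by simp
qed

theorem corollary1:
  fixes n :: nat and E :: "nat \<Rightarrow> (nat \<times> nat) set" and d :: "nat \<Rightarrow> real"
  assumes "n \<ge> 2"
    and "\<And>k. E k \<subseteq> nodes n \<times> nodes n"
    and "inj_on d (nodes n)"
    and "\<And>k. k \<le> n - 2 \<Longrightarrow> contains_cycle n E (psi n k) k"
  shows "\<forall>i\<in>nodes n. card (know E d n i) = n \<and> (LEAST k. card (know E d k i) \<le> k) = n"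
proof
  fix i assume i: "i \<in> nodes n"
  have cd: "card (d ` nodes n) = n" using assms(3) by (simp add: card_image nodes_def)
  have fin: "finite (d ` nodes n)" by (simp add: nodes_def)
  have up: "card (know E d k i) \<le> n" for k
  proof -
    have "card (know E d k i) \<le> card (d ` nodes n)"
      using know_sub[OF assms(2) i] fin by (rule card_mono[rotated])
    then show ?thesis using cd by simp
  qed
  have "card (know E d (n-1) i) \<ge> n" using card_lb[OF assms(2,3,4) i, of "n-1"] assms(1) by simp
  moreover have "card (know E d (n-1) i) \<le> card (know E d n i)"
  proof (rule card_mono)
    show "finite (know E d n i)" using know_sub[OF assms(2) i] fin by (rule finite_subset)
    show "know E d (n-1) i \<subseteq> know E d n i" by (rule know_mono_le) simp
  qed
  ultimately have c: "card (know E d n i) = n" using up[of n] by simp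
  have "(LEAST k. card (know E d k i) \<le> k) = n"
  proof (rule Least_equality)
    show "card (know E d n i) \<le> n" using c by simp
  next
    fix y assume "card (know E d y i) \<le> y"
    then show "n \<le> y" using card_lb[OF assms(2,3,4) i, of y] by (cases "y \<le> n - 1") auto
  qed
  then show "card (know E d n i) = n \<and> (LEAST k. card (know E d k i) \<le> k) = n" using c by simp
qed

end
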